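(* Let $U$ be a nonempty finite set, $R\subseteq U\times U$ serial and transitive, and $r$ the rank function of $M(Reg(U,R))$. Then for every $X\in Reg(U,R)$ and every $e\in U\setminus X$, $r(X\cup\{e\})=h(X)+1$.
   Context: $R_s(x)=\{y\in U\mid xRy\}$; $\underline{R}(X)=\{x\mid R_s(x)\subseteq X\}$, $\overline{R}(X)=\{x\mid R_s(x)\cap X\neq\emptyset\}$; $X$ is regular if $X=\underline{R}(\overline{R}(X))$, and $Reg(U,R)$ is the lattice of regular sets under inclusion, with least element $\emptyset$. $h(A)$ is the length of a maximal chain in $[\emptyset,A]$. $M(Reg(U,R))$ is the matroid on $U$ with independent sets $\{X\subseteq U\mid h(Y)\ge|X\cap Y|\ \forall Y\in Reg(U,R)\}$ and rank function $r(X)=\max\{|I|\mid I\subseteq X \text{ independent}\}$. *)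

theory Defs
  imports Main
begin

definition successors :: "'a set \<Rightarrow> ('a \<times> 'a) set \<Rightarrow> 'a \<Rightarrow> 'a set" where
  "successors U R x = {y \<in> U. (x, y) \<in> R}"

definition lower_approx :: "'a set \<Rightarrow> ('a \<times> 'a) set \<Rightarrow> 'a set \<Rightarrow> 'a set" where
  "lower_approx U R X = {x \<in> U. successors U R x \<subseteq> X}"

definition upper_approx :: "'a set \<Rightarrow> ('a \<times> 'a) set \<Rightarrow> 'a set \<Rightarrow> 'a set" where
  "upper_approx U R X = {x \<in> U. successors U R x \<inter> X \<noteq> {}}"

definition Reg :: "'a set \<Rightarrow> ('a \<times> 'a) set \<Rightarrow> 'a set set" where
  "Reg U R = {X. X \<subseteq> U \<and> X = lower_approx U R (upper_approx U R X)}"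

definition serial_on :: "'a set \<Rightarrow> ('a \<times> 'a) set \<Rightarrow> bool" where
  "serial_on U R \<longleftrightarrow> (\<forall>x\<in>U. \<exists>y\<in>U. (x, y) \<in> R)"

definition reg_chain :: "'a set \<Rightarrow> ('a \<times> 'a) set \<Rightarrow> 'a set \<Rightarrow> 'a set set \<Rightarrow> bool" where
  "reg_chain U R A C \<longleftrightarrow> finite C \<and> C \<subseteq> {Y \<in> Reg U R. Y \<subseteq> A}
     \<and> (\<forall>Y\<in>C. \<forall>Z\<in>C. Y \<subseteq> Z \<or> Z \<subseteq> Y)"

(* h(A): length (number of elements minus one) of a maximal chain in [\<emptyset>, A] *)
definition height :: "'a set \<Rightarrow> ('a \<times> 'a) set \<Rightarrow> 'a set \<Rightarrow> nat" where
  "height U R A = Max {card C | C. reg_chain U R A C} - 1"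

definition reg_indep :: "'a set \<Rightarrow> ('a \<times> 'a) set \<Rightarrow> 'a set \<Rightarrow> bool" where
  "reg_indep U R X \<longleftrightarrow> X \<subseteq> U \<and> (\<forall>Y\<in>Reg U R. height U R Y \<ge> card (X \<inter> Y))"

definition reg_rank :: "'a set \<Rightarrow> ('a \<times> 'a) set \<Rightarrow> 'a set \<Rightarrow> nat" where
  "reg_rank U R X = Max {card I | I. I \<subseteq> X \<and> reg_indep U R I}"

end

theory Submission
  imports Defs
begin

locale STR =
  fixes U :: "'a set" and R :: "('a \<times> 'a) set"
  assumes finU: "finite U" and RU: "R \<subseteq> U \<times> U"
    and ser: "serial_on U R" and tr: "trans R"
begin

definition terminal :: "'a \<Rightarrow> bool" where
  "terminal t \<longleftrightarrow> t \<in> U \<and> (\<forall>y. (t,y)\<in>R \<longrightarrow> (y,t)\<in>R)"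

definition rep :: "'a \<Rightarrow> 'a" where "rep t = (SOME r. (t,r) \<in> R)"

definition Rep :: "'a set" where "Rep = rep ` Collect terminal"

lemma trR: "(x,y)\<in>R \<Longrightarrow> (y,z)\<in>R \<Longrightarrow> (x,z)\<in>R"
  using tr by (meson transE)

lemma RU1: "(x,y)\<in>R \<Longrightarrow> x \<in> U \<and> y \<in> U" using RU by auto

lemma serE: "x \<in> U \<Longrightarrow> \<exists>y. (x,y)\<in>R"
  using ser unfolding serial_on_def by auto

lemma term_refl: "terminal t \<Longrightarrow> (t,t)\<in>R"
  unfolding terminal_def using serE trR by blast

lemma term_succ: "terminal t \<Longrightarrow> (t,y)\<in>R \<Longrightarrow> terminal y"
  unfolding terminal_def using RU1 trR by blast

lemma rep_R: "terminal t \<Longrightarrow> (t, rep t)\<in>R"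
  unfolding rep_def using term_refl by (metis someI)

lemma rep_term: "terminal t \<Longrightarrow> terminal (rep t)"
  using rep_R term_succ by blast

lemma rep_eq: assumes "terminal t" "(t,t')\<in>R" shows "rep t' = rep t"
proof -
  have "(\<lambda>r. (t',r)\<in>R) = (\<lambda>r. (t,r)\<in>R)"
    using assms unfolding terminal_def by (metis trR)
  then show ?thesis unfolding rep_def by simp
qed

lemma Rep_term: "r \<in> Rep \<Longrightarrow> terminal r"
  unfolding Rep_def using rep_term by auto

lemma Rep_fix: "r \<in> Rep \<Longrightarrow> rep r = r"
  unfolding Rep_def using rep_eq rep_R by auto

lemma Rep_unique: "r \<in> Rep \<Longrightarrow> r' \<in> Rep \<Longrightarrow> (r,r')\<in>R \<Longrightarrow> r' = r"
  using Rep_fix Rep_term rep_eq by metis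

lemma Rep_U: "Rep \<subseteq> U" using Rep_term terminal_def by blast

lemma reach_term: assumes "y \<in> U" shows "\<exists>w. (y,w)\<in>R \<and> terminal w"
proof -
  define m where "m z = card {w. (z,w)\<in>R}" for z
  obtain t0 where "(y,t0)\<in>R" using serE assms by blast
  then obtain t where t: "(y,t)\<in>R" and tmin: "\<And>z. (y,z)\<in>R \<Longrightarrow> m t \<le> m z"
    using ex_has_least_nat[of "\<lambda>z. (y,z)\<in>R" t0 m] by auto
  have fin: "\<And>z. finite {w. (z,w)\<in>R}"
    by (rule finite_subset[OF _ finU]) (auto dest: RU1)
  have key: "\<And>v. (t,v)\<in>R \<Longrightarrow> {w. (v,w)\<in>R} = {w. (t,w)\<in>R}"
  proof -
    fix v assume tv: "(t,v)\<in>R"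
    have sub: "{w. (v,w)\<in>R} \<subseteq> {w. (t,w)\<in>R}" using tv trR by blast
    have yv: "(y,v)\<in>R" using trR[OF t tv] .
    have "m t \<le> m v" using tmin[OF yv] .
    then have "card {w. (t,w)\<in>R} \<le> card {w. (v,w)\<in>R}" unfolding m_def .
    moreover have "card {w. (v,w)\<in>R} \<le> card {w. (t,w)\<in>R}" using card_mono[OF fin sub] .
    ultimately have "card {w. (v,w)\<in>R} = card {w. (t,w)\<in>R}" by (rule antisym[rotated])
    then show "{w. (v,w)\<in>R} = {w. (t,w)\<in>R}"
      using card_subset_eq[OF fin sub] by blast
  qed
  obtain w where tw: "(t,w)\<in>R" using serE RU1[OF t] by blast
  have ww: "(w,w)\<in>R" using key[OF tw] tw by blast
  have "terminal w"
    unfolding terminal_def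
  proof (intro conjI allI impI)
    show "w \<in> U" using RU1[OF tw] by simp
    fix v assume "(w,v)\<in>R"
    then have tv: "(t,v)\<in>R" using trR tw by blast
    show "(v,w)\<in>R" using key[OF tv] tw by blast
  qed
  then show ?thesis using trR[OF t tw] by (intro exI[of _ w] conjI)
qed

lemma reach_Rep: "y \<in> U \<Longrightarrow> \<exists>r\<in>Rep. (y,r)\<in>R"
proof -
  assume "y \<in> U"
  then obtain w where w: "(y,w)\<in>R" "terminal w" using reach_term by blast
  have "rep w \<in> Rep" unfolding Rep_def using w(2) by blast
  moreover have "(y, rep w)\<in>R" using trR[OF w(1) rep_R[OF w(2)]] .
  ultimately show ?thesis by blast
qed

lemma succ_eq: "successors U R x = {y. (x,y)\<in>R}"
  unfolding successors_def using RU1 by blast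

lemma charA: assumes "Y \<in> Reg U R"
  shows "x \<in> Y \<longleftrightarrow> x \<in> U \<and> (\<forall>r\<in>Rep. (x,r)\<in>R \<longrightarrow> r\<in>Y)"
proof -
  have YU: "Y \<subseteq> U" and Yeq: "Y = lower_approx U R (upper_approx U R Y)"
    using assms unfolding Reg_def by auto
  have memL: "\<And>x. x \<in> lower_approx U R (upper_approx U R Y) \<longleftrightarrow> x \<in> U \<and> (\<forall>y. (x,y)\<in>R \<longrightarrow> (\<exists>z. (y,z)\<in>R \<and> z \<in> Y))"
    unfolding lower_approx_def upper_approx_def succ_eq using RU1 by blast
  have mem1: "\<And>x y. x \<in> Y \<Longrightarrow> (x,y)\<in>R \<Longrightarrow> \<exists>z. (y,z)\<in>R \<and> z \<in> Y"
  proof -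
    fix x y assume "x \<in> Y" "(x,y)\<in>R"
    then have "x \<in> lower_approx U R (upper_approx U R Y)" using Yeq by simp
    then show "\<exists>z. (y,z)\<in>R \<and> z \<in> Y" using memL \<open>(x,y)\<in>R\<close> by blast
  qed
  have mem2: "\<And>x. x \<in> U \<Longrightarrow> (\<forall>y. (x,y)\<in>R \<longrightarrow> (\<exists>z. (y,z)\<in>R \<and> z \<in> Y)) \<Longrightarrow> x \<in> Y"
  proof -
    fix x assume "x \<in> U" "\<forall>y. (x,y)\<in>R \<longrightarrow> (\<exists>z. (y,z)\<in>R \<and> z \<in> Y)"
    then have "x \<in> lower_approx U R (upper_approx U R Y)" using memL by blast
    then show "x \<in> Y" using Yeq by simp
  qed
  show ?thesis
  proof
    assume x: "x \<in> Y"
    have "\<forall>r\<in>Rep. (x,r)\<in>R \<longrightarrow> r\<in>Y"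
    proof (intro ballI impI)
      fix r assume r: "r \<in> Rep" "(x,r)\<in>R"
      then obtain z where z: "(r,z)\<in>R" "z \<in> Y" using mem1 x by blast
      have tr: "terminal r" using Rep_term r by blast
      then have rU: "r \<in> U" unfolding terminal_def by blast
      have "\<exists>z'. (w,z')\<in>R \<and> z' \<in> Y" if rw: "(r,w)\<in>R" for w
      proof -
        have "(w,r)\<in>R" using tr rw unfolding terminal_def by blast
        then have "(w,z)\<in>R" using trR z(1) by blast
        then show ?thesis using z(2) by blast
      qed
      then show "r \<in> Y" using mem2[OF rU] by blast
    qed
    then show "x \<in> U \<and> (\<forall>r\<in>Rep. (x,r)\<in>R \<longrightarrow> r\<in>Y)" using x YU by blast
  next
    assume h: "x \<in> U \<and> (\<forall>r\<in>Rep. (x,r)\<in>R \<longrightarrow> r\<in>Y)"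
    have "\<exists>z. (y,z)\<in>R \<and> z \<in> Y" if xy: "(x,y)\<in>R" for y
    proof -
      have "y \<in> U" using RU1[OF xy] by simp
      then obtain r where r: "r \<in> Rep" "(y,r)\<in>R" using reach_Rep by blast
      have "(x,r)\<in>R" using trR[OF xy r(2)] .
      then have "r \<in> Y" using h r(1) by blast
      then show ?thesis using r(2) by blast
    qed
    then show "x \<in> Y" using mem2 h by blast
  qed
qed

lemma charB: assumes Y: "Y \<in> Reg U R" and Z: "Z \<in> Reg U R" and sub: "Y \<inter> Rep \<subseteq> Z \<inter> Rep" shows "Y \<subseteq> Z"
proof
  fix x assume "x \<in> Y"
  then have h: "x \<in> U \<and> (\<forall>r\<in>Rep. (x,r)\<in>R \<longrightarrow> r\<in>Y)" using charA[OF Y] by blast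
  then have "x \<in> U \<and> (\<forall>r\<in>Rep. (x,r)\<in>R \<longrightarrow> r\<in>Z)" using sub by blast
  then show "x \<in> Z" using charA[OF Z] by blast
qed

definition Phi :: "'a set \<Rightarrow> 'a set" where
  "Phi S = {x\<in>U. \<forall>r\<in>Rep. (x,r)\<in>R \<longrightarrow> r\<in>S}"

lemma Phi_Rep: assumes S: "S \<subseteq> Rep" shows "Phi S \<inter> Rep = S"
proof
  show "Phi S \<inter> Rep \<subseteq> S"
  proof
    fix r assume r: "r \<in> Phi S \<inter> Rep"
    then have "(r,r)\<in>R" using Rep_term term_refl by blast
    then show "r \<in> S" using r unfolding Phi_def by blast
  qed
  show "S \<subseteq> Phi S \<inter> Rep"
  proof
    fix r assume r: "r \<in> S"
    then have rR: "r \<in> Rep" using S by blast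
    have "r \<in> U" using Rep_U rR by blast
    moreover have "\<forall>r'\<in>Rep. (r,r')\<in>R \<longrightarrow> r'\<in>S"
    proof (intro ballI impI)
      fix r' assume "r' \<in> Rep" "(r,r')\<in>R"
      then have "r' = r" using Rep_unique rR by blast
      then show "r' \<in> S" using r by simp
    qed
    ultimately show "r \<in> Phi S \<inter> Rep" unfolding Phi_def using rR by blast
  qed
qed

lemma Phi_Reg: assumes S: "S \<subseteq> Rep" shows "Phi S \<in> Reg U R"
proof -
  have "Phi S = lower_approx U R (upper_approx U R (Phi S))"
  proof
    show "Phi S \<subseteq> lower_approx U R (upper_approx U R (Phi S))"
    proof
      fix x assume x: "x \<in> Phi S"
      have "\<exists>z. (y,z)\<in>R \<and> z \<in> Phi S" if xy: "(x,y)\<in>R" for y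
      proof -
        have "y \<in> U" using RU1[OF xy] by simp
        then obtain r where r: "r\<in>Rep" "(y,r)\<in>R" using reach_Rep by blast
        have "r \<in> S" using x r trR[OF xy r(2)] unfolding Phi_def by blast
        then have "r \<in> Phi S" using Phi_Rep[OF S] by blast
        then show ?thesis using r by blast
      qed
      then show "x \<in> lower_approx U R (upper_approx U R (Phi S))"
        using x unfolding lower_approx_def upper_approx_def succ_eq Phi_def using RU1 by blast
    qed
  next
    show "lower_approx U R (upper_approx U R (Phi S)) \<subseteq> Phi S"
    proof
      fix x assume x: "x \<in> lower_approx U R (upper_approx U R (Phi S))"
      have "r \<in> S" if r: "r \<in> Rep" "(x,r)\<in>R" for r
      proof -
        obtain z where z: "(r,z)\<in>R" "z \<in> Phi S"
          using x r unfolding lower_approx_def upper_approx_def succ_eq by blast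
        have "rep z = r" using rep_eq[OF Rep_term[OF r(1)] z(1)] Rep_fix[OF r(1)] by simp
        moreover have "terminal z" using term_succ Rep_term r z by blast
        ultimately have "(z,r)\<in>R" using rep_R by metis
        then show "r \<in> S" using z r unfolding Phi_def by blast
      qed
      then show "x \<in> Phi S" using x unfolding Phi_def lower_approx_def by blast
    qed
  qed
  moreover have "Phi S \<subseteq> U" unfolding Phi_def by blast
  ultimately show ?thesis unfolding Reg_def by blast
qed

lemma Phi_mono: "S \<subseteq> T \<Longrightarrow> Phi S \<subseteq> Phi T"
  unfolding Phi_def by blast

lemma finZ: "finite (Z \<inter> Rep)"
  by (rule finite_subset[OF _ finU]) (use Rep_U in blast)

lemma chain_bound: assumes Y: "Y \<in> Reg U R" and C: "reg_chain U R Y C"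
  shows "card C \<le> card (Y \<inter> Rep) + 1"
proof -
  have CR: "\<And>Z. Z \<in> C \<Longrightarrow> Z \<in> Reg U R \<and> Z \<subseteq> Y" using C unfolding reg_chain_def by blast
  have ch: "\<And>Z W. Z \<in> C \<Longrightarrow> W \<in> C \<Longrightarrow> Z \<subseteq> W \<or> W \<subseteq> Z" using C unfolding reg_chain_def by blast
  have inj: "inj_on (\<lambda>Z. card (Z \<inter> Rep)) C"
  proof (rule inj_onI)
    fix Z W assume Z: "Z \<in> C" and W: "W \<in> C" and eq: "card (Z \<inter> Rep) = card (W \<inter> Rep)"
    have "Z \<inter> Rep = W \<inter> Rep"
    proof (cases "Z \<subseteq> W")
      case True
      then have "Z \<inter> Rep \<subseteq> W \<inter> Rep" by blast
      then show ?thesis using card_subset_eq[OF finZ] eq by metis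
    next
      case False
      then have "W \<subseteq> Z" using ch[OF Z W] by blast
      then have "W \<inter> Rep \<subseteq> Z \<inter> Rep" by blast
      then show ?thesis using card_subset_eq[OF finZ] eq by metis
    qed
    then have "Z \<subseteq> W" "W \<subseteq> Z" using charB CR[OF Z] CR[OF W] by (metis order_refl)+
    then show "Z = W" by (rule subset_antisym)
  qed
  have img: "(\<lambda>Z. card (Z \<inter> Rep)) ` C \<subseteq> {..card (Y \<inter> Rep)}"
  proof
    fix n assume "n \<in> (\<lambda>Z. card (Z \<inter> Rep)) ` C"
    then obtain Z where Z: "Z \<in> C" "n = card (Z \<inter> Rep)" by blast
    have "Z \<inter> Rep \<subseteq> Y \<inter> Rep" using CR[OF Z(1)] by blast
    then have "card (Z \<inter> Rep) \<le> card (Y \<inter> Rep)" by (rule card_mono[OF finZ])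
    then show "n \<in> {..card (Y \<inter> Rep)}" using Z(2) by simp
  qed
  have "card C = card ((\<lambda>Z. card (Z \<inter> Rep)) ` C)" using card_image[OF inj] by simp
  also have "\<dots> \<le> card {..card (Y \<inter> Rep)}" by (rule card_mono[OF _ img]) simp
  finally show ?thesis by simp
qed

lemma chain_exists: assumes Y: "Y \<in> Reg U R"
  shows "\<exists>C. reg_chain U R Y C \<and> card C = card (Y \<inter> Rep) + 1"
proof -
  have finR: "finite (Y \<inter> Rep)" using Rep_U finU finite_subset by blast
  obtain xs where xs: "set xs = Y \<inter> Rep" "distinct xs" using finite_distinct_list[OF finR] by blast
  define k where "k = length xs"
  have k: "card (Y \<inter> Rep) = k" using xs distinct_card k_def by metis
  define C where "C = (\<lambda>i. Phi (set (take i xs))) ` {..k}"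
  have sub: "\<And>i. set (take i xs) \<subseteq> Rep" using xs set_take_subset by (metis Int_subset_iff subset_trans)
  have subY: "\<And>i. set (take i xs) \<subseteq> Y \<inter> Rep" using xs set_take_subset by metis
  have cardi: "\<And>i. i \<le> k \<Longrightarrow> card (set (take i xs)) = i"
    using xs(2) distinct_card distinct_take k_def by (metis length_take min.absorb2)
  have inj: "inj_on (\<lambda>i. Phi (set (take i xs))) {..k}"
  proof (rule inj_onI)
    fix i j assume i: "i \<in> {..k}" and j: "j \<in> {..k}" and eq: "Phi (set (take i xs)) = Phi (set (take j xs))"
    then have "set (take i xs) = set (take j xs)" using Phi_Rep[OF sub] by metis
    then show "i = j" using cardi i j by (metis atMost_iff)
  qed
  have "reg_chain U R Y C"
    unfolding reg_chain_def
  proof (intro conjI)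
    show "finite C" unfolding C_def by simp
    show "C \<subseteq> {Y' \<in> Reg U R. Y' \<subseteq> Y}"
    proof
      fix Z assume "Z \<in> C"
      then obtain i where Z: "Z = Phi (set (take i xs))" unfolding C_def by blast
      have reg: "Z \<in> Reg U R" using Z Phi_Reg sub by blast
      have "Z \<inter> Rep \<subseteq> Y \<inter> Rep" using Z Phi_Rep[OF sub] subY by metis
      then show "Z \<in> {Y' \<in> Reg U R. Y' \<subseteq> Y}" using charB[OF reg Y] reg by blast
    qed
    show "\<forall>Y'\<in>C. \<forall>Z\<in>C. Y' \<subseteq> Z \<or> Z \<subseteq> Y'"
      unfolding C_def using Phi_mono set_take_subset_set_take nat_le_linear by (smt (verit) imageE)
  qed
  moreover have "card C = k + 1" unfolding C_def using card_image[OF inj] by simp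
  ultimately show ?thesis using k by blast
qed

lemma height_eq: assumes Y: "Y \<in> Reg U R" shows "height U R Y = card (Y \<inter> Rep)"
proof -
  define M where "M = {card C | C. reg_chain U R Y C}"
  have "M \<subseteq> {..card (Y \<inter> Rep) + 1}" unfolding M_def using chain_bound[OF Y] by auto
  then have fin: "finite M" using finite_subset by blast
  obtain C where C: "reg_chain U R Y C" "card C = card (Y \<inter> Rep) + 1" using chain_exists[OF Y] by blast
  have inM: "card (Y \<inter> Rep) + 1 \<in> M" unfolding M_def using C(1) C(2)[symmetric] by blast
  have bnd: "\<And>n. n \<in> M \<Longrightarrow> n \<le> card (Y \<inter> Rep) + 1" unfolding M_def using chain_bound[OF Y] by blast
  have "Max M = card (Y \<inter> Rep) + 1" by (rule Max_eqI[OF fin bnd inM])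
  then show ?thesis unfolding height_def M_def by simp
qed

end

theorem proposition6:
  fixes U :: "'a set" and R :: "('a \<times> 'a) set"
  assumes "finite U" and "U \<noteq> {}" and "R \<subseteq> U \<times> U"
    and "serial_on U R" and "trans R"
    and "X \<in> Reg U R" and "e \<in> U - X"
  shows "reg_rank U R (X \<union> {e}) = height U R X + 1"
proof -
  interpret STR U R using assms by unfold_locales auto
  have XU: "X \<subseteq> U" using assms(6) unfolding Reg_def by blast
  have hX: "height U R X = card (X \<inter> Rep)" using height_eq assms(6) by blast
  define M where "M = {card I | I. I \<subseteq> X \<union> {e} \<and> reg_indep U R I}"
  have bound: "n \<le> height U R X + 1" if nM: "n \<in> M" for n
  proof -
    obtain I where I: "n = card I" "I \<subseteq> X \<union> {e}" "reg_indep U R I" using nM unfolding M_def by blast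
    have finI: "finite I" using I(3) assms(1) finite_subset unfolding reg_indep_def by blast
    have "card (I \<inter> X) \<le> height U R X" using I(3) assms(6) unfolding reg_indep_def by blast
    moreover have "I \<subseteq> insert e (I \<inter> X)" using I(2) by blast
    then have "card I \<le> card (insert e (I \<inter> X))" using finI by (intro card_mono) auto
    moreover have "card (insert e (I \<inter> X)) \<le> card (I \<inter> X) + 1"
      using finI by (simp add: card_insert_if)
    ultimately show ?thesis using I(1) by linarith
  qed
  define I0 where "I0 = insert e (X \<inter> Rep)"
  have eX: "e \<notin> X" "e \<in> U" using assms(7) by auto
  have finXR: "\<And>Z. finite (Z \<inter> Rep)" using Rep_U assms(1) finite_subset by blast
  have cI0: "card I0 = height U R X + 1" unfolding I0_def hX using eX finXR by simp
  have ind: "reg_indep U R I0"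
    unfolding reg_indep_def
  proof (intro conjI ballI)
    show "I0 \<subseteq> U" unfolding I0_def using XU eX by blast
    fix Y assume Y: "Y \<in> Reg U R"
    show "card (I0 \<inter> Y) \<le> height U R Y"
    proof (cases "e \<in> Y")
      case False
      then have "I0 \<inter> Y \<subseteq> Y \<inter> Rep" unfolding I0_def by blast
      then show ?thesis using height_eq[OF Y] card_mono finXR by metis
    next
      case True
      have eq: "I0 \<inter> Y = insert e (X \<inter> Y \<inter> Rep)" unfolding I0_def using True by blast
      have "\<not> Y \<inter> Rep \<subseteq> X \<inter> Rep" using charB[OF Y assms(6)] True eX by blast
      then have "X \<inter> Y \<inter> Rep \<subset> Y \<inter> Rep" by blast
      then have "card (X \<inter> Y \<inter> Rep) < card (Y \<inter> Rep)" using psubset_card_mono finXR by blast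
      moreover have "card (I0 \<inter> Y) = card (X \<inter> Y \<inter> Rep) + 1"
        unfolding eq using eX finXR
        by (metis Int_assoc Int_iff card_insert_disjoint Suc_eq_plus1)
      ultimately show ?thesis using height_eq[OF Y] by linarith
    qed
  qed
  have inM: "height U R X + 1 \<in> M" unfolding M_def
    using ind cI0 unfolding I0_def by (intro CollectI exI[of _ I0]) (auto simp: I0_def)
  have finM: "finite M" using bound finite_nat_set_iff_bounded_le by blast
  have "Max M = height U R X + 1"
    by (rule Max_eqI[OF finM bound inM])
  then show ?thesis unfolding reg_rank_def M_def by simp
qed

end
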